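(* Consider the linear vehicle platoon model $\dot{x}(t)=A_{\mathrm{c}}x(t)+B_{\mathrm{c}}u(t)$ with communication attempt time instants $\mathcal{S}=\{s_0,s_1,s_2,\ldots\}$ and the time-discretized braking model (so that the reference desired acceleration $u_0(t)$ is constant on each interval $[s_k,s_{k+1})$). If $\mathcal{S}\subseteq\mathcal{T}$ with $\mathcal{T}\triangleq\{t_0,t_1,t_2,\ldots\}$ and there exists $\alpha>0$ such that \[ t_{k+1}-t_{k}\leq\ln\left(\frac{\mu(\tilde{A})\alpha}{\varphi\|\tilde{x}(t_{k})\|}+1\right)/\mu(\tilde{A}) \] for every $k\in\mathbb{N}_0$, where \[ \varphi\triangleq\max_{i\in\{2,\ldots,n\}}\|q_i^{\top}(A_{\mathrm{c}}b_1^{\top}+B_{\mathrm{c}}b_2^{\top})\|, \] then \[ |d_i(t)-d_i(t_k)|\leq\alpha,\quad t\in[t_k,t_{k+1}), \] for every $k\in\mathbb{N}_0$ and every $i\in\{2,\ldots,n\}$.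
   Context: The platoon consists of a virtual reference vehicle and $n$ actual vehicles; its dynamics are the linear system $\dot{x}(t)=A_{\mathrm{c}}x(t)+B_{\mathrm{c}}u(t)$ with state $x(t)\in\mathbb{R}^{3+6n}$ (stacking $[p_0,v_0,a_0]$ for the reference vehicle and $[e_i,\dot e_i,p_i,v_i,a_i,u_i]$ for each vehicle $i=1,\dots,n$, with $p$ positions) and input $u(t)=[u_0(t),\hat u_0(t),\hat u_1(t),\ldots,\hat u_{n-1}(t)]^\top\in\mathbb{R}^{1+n}$, where $A_{\mathrm{c}}\in\mathbb{R}^{(3+6n)\times(3+6n)}$ and $B_{\mathrm{c}}\in\mathbb{R}^{(3+6n)\times(1+n)}$ are the platoon system matrices. Communication attempts occur at $s_j=jT$, $T>0$; the received desired accelerations $\hat u_i(t)$ ($i\ge 1$) are held constant on $[s_j,s_{j+1})$ (updated at $s_j$ on success, kept on packet loss), $\hat u_0=u_0$, and the time-discretized braking model sets $u_0(t)=u_{0,k}$ constant on $[s_k,s_{k+1})$. Hence, when $\mathcal{S}\subseteq\mathcal{T}$, $u(t)=u(t_k)$ on $[t_k,t_{k+1})$. Inter-vehicle distances are $d_i(t)=p_{i-1}(t)-p_i(t)-L_i=q_i^\top x(t)-L_i$ for $i\in\{2,\ldots,n\}$, where $L_i>0$ is the vehicle length and $q_i\in\mathbb{R}^{3+6n}$ has entry $-1$ at position $6i+6$, entry $1$ at position $6i$, and $0$ elsewhere. The lifted state is $\tilde x(t)=[x^\top(t),u^\top(t)]^\top\in\mathbb{R}^{4+7n}$, satisfying $\dot{\tilde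 x}(t)=\tilde A\tilde x(t)$ on $[t_k,t_{k+1})$ with $\tilde{A}=\begin{bmatrix}A_{\mathrm{c}} & B_{\mathrm{c}}\\ 0 & 0\end{bmatrix}$. The matrices $b_1=\begin{bmatrix}I_{3+6n}\\ 0_{(1+n)\times(3+6n)}\end{bmatrix}\in\mathbb{R}^{(4+7n)\times(3+6n)}$ and $b_2=\begin{bmatrix}0_{(3+6n)\times(1+n)}\\ I_{1+n}\end{bmatrix}\in\mathbb{R}^{(4+7n)\times(1+n)}$, where $I_m$ denotes the $m\times m$ identity matrix, satisfy $x=b_1^\top\tilde x$, $u=b_2^\top\tilde x$. $\|\cdot\|$ is the Euclidean norm / induced matrix norm and $\mu(M)=\lambda_{\max}((M+M^\top)/2)$ is the logarithmic norm. *)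

theory Defs
  imports Complex_Main "Jordan_Normal_Form.Char_Poly"
begin

definition vnorm :: "real vec \<Rightarrow> real" where
  "vnorm v = sqrt (\<Sum>j<dim_vec v. (v $ j)\<^sup>2)"

definition lambda_max :: "real mat \<Rightarrow> real" where
  "lambda_max M = Max {k. eigenvalue M k}"

definition lognorm :: "real mat \<Rightarrow> real" where
  "lognorm M = lambda_max ((1/2) \<cdot>\<^sub>m (M + transpose_mat M))"

definition nx :: "nat \<Rightarrow> nat" where "nx n = 3 + 6 * n"
definition nu :: "nat \<Rightarrow> nat" where "nu n = 1 + n"

definition Atil :: "nat \<Rightarrow> real mat \<Rightarrow> real mat \<Rightarrow> real mat" where
  "Atil n Ac Bc = four_block_mat Ac Bc (0\<^sub>m (nu n) (nx n)) (0\<^sub>m (nu n) (nu n))"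

definition b1 :: "nat \<Rightarrow> real mat" where
  "b1 n = mat (nx n + nu n) (nx n) (\<lambda>(r, c). if r = c then 1 else 0)"
definition b2 :: "nat \<Rightarrow> real mat" where
  "b2 n = mat (nx n + nu n) (nu n) (\<lambda>(r, c). if r = nx n + c then 1 else 0)"

(* 0-based index of the position p_j in the state vector
   [p0,v0,a0, e1,de1,p1,v1,a1,u1, ..., en,den,pn,vn,an,un] *)
definition ppos :: "nat \<Rightarrow> nat" where
  "ppos j = (if j = 0 then 0 else 6 * j - 1)"

(* q_i: +1 at position of p_(i-1), -1 at position of p_i, so q_i^T x = p_(i-1) - p_i *)
definition qv :: "nat \<Rightarrow> nat \<Rightarrow> real vec" where
  "qv n i = vec (nx n) (\<lambda>j. (if j = ppos (i - 1) then 1 else 0) - (if j = ppos i then 1 else 0))"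

definition dist_i :: "nat \<Rightarrow> (nat \<Rightarrow> real) \<Rightarrow> nat \<Rightarrow> real vec \<Rightarrow> real" where
  "dist_i n L i xv = qv n i \<bullet> xv - L i"

definition phi :: "nat \<Rightarrow> real mat \<Rightarrow> real mat \<Rightarrow> real" where
  "phi n Ac Bc = Max ((\<lambda>i. vnorm (transpose_mat (Ac * transpose_mat (b1 n) + Bc * transpose_mat (b2 n)) *\<^sub>v qv n i)) ` {2..n})"

end

theory Submission
  imports Defs "HOL-Analysis.Function_Topology" "HOL-Analysis.Convex"
begin

definition qfm :: "(nat \<Rightarrow> nat \<Rightarrow> real) \<Rightarrow> nat \<Rightarrow> (nat \<Rightarrow> real) \<Rightarrow> (nat \<Rightarrow> real) \<Rightarrow> real" where
  "qfm M N a b = (\<Sum>i<N. \<Sum>j<N. M i j * a i * b j)"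
definition sqs :: "nat \<Rightarrow> (nat \<Rightarrow> real) \<Rightarrow> real" where
  "sqs N v = (\<Sum>i<N. (v i)^2)"

lemma sqs_nonneg: "sqs N v \<ge> 0"
  unfolding sqs_def by (auto intro: sum_nonneg)

lemma qfm_cong: "(\<And>i. i < N \<Longrightarrow> a i = a' i) \<Longrightarrow> (\<And>i. i < N \<Longrightarrow> b i = b' i) \<Longrightarrow> qfm M N a b = qfm M N a' b'"
  unfolding qfm_def by (intro sum.cong) auto

lemma sqs_cong: "(\<And>i. i < N \<Longrightarrow> a i = a' i) \<Longrightarrow> sqs N a = sqs N a'"
  unfolding sqs_def by (intro sum.cong) auto

lemma qfm_add_left: "qfm M N (\<lambda>i. a i + e * b i) w = qfm M N a w + e * qfm M N b w"
  unfolding qfm_def by (simp add: algebra_simps sum.distrib sum_distrib_left)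

lemma qfm_add_right: "qfm M N w (\<lambda>i. a i + e * b i) = qfm M N w a + e * qfm M N w b"
  unfolding qfm_def by (simp add: algebra_simps sum.distrib sum_distrib_left)

lemma qfm_scale: "qfm M N (\<lambda>i. c * a i) (\<lambda>i. c * b i) = c * c * qfm M N a b"
  unfolding qfm_def by (simp add: algebra_simps sum_distrib_left)

lemma sqs_scale: "sqs N (\<lambda>i. c * a i) = c^2 * sqs N a"
  unfolding sqs_def by (simp add: algebra_simps sum_distrib_left power_mult_distrib)

lemma qfm_sym: assumes "\<And>i j. i < N \<Longrightarrow> j < N \<Longrightarrow> M i j = M j i"
  shows "qfm M N a b = qfm M N b a"
proof -
  have "qfm M N a b = (\<Sum>j<N. \<Sum>i<N. M i j * a i * b j)" unfolding qfm_def by (rule sum.swap)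
  also have "\<dots> = qfm M N b a" unfolding qfm_def
    by (intro sum.cong refl) (simp add: assms mult.commute mult.left_commute)
  finally show ?thesis .
qed

lemma qfm_right: "qfm M N r v = (\<Sum>i<N. r i * (\<Sum>j<N. M i j * v j))"
  unfolding qfm_def by (simp add: sum_distrib_left algebra_simps)

lemma sqs_add: "sqs N (\<lambda>i. a i + e * b i) = sqs N a + 2 * e * (\<Sum>i<N. a i * b i) + e^2 * sqs N b"
  unfolding sqs_def by (simp add: power2_eq_square algebra_simps sum.distrib sum_distrib_left)

lemma sqs_zero: "sqs N v = 0 \<Longrightarrow> i < N \<Longrightarrow> v i = 0"
  unfolding sqs_def by (subst (asm) sum_nonneg_eq_0_iff) auto

lemma sqs_le: "i < N \<Longrightarrow> (v i)^2 \<le> sqs N v"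
  unfolding sqs_def by (rule member_le_sum) auto

lemma exists_max:
  assumes N: "N > 0"
  shows "\<exists>v0. sqs N v0 = 1 \<and> (\<forall>v. sqs N v = 1 \<longrightarrow> qfm M N v v \<le> qfm M N v0 v0)"
proof -
  let ?X = "product_topology (\<lambda>_. euclideanreal) {..<N}"
  let ?C = "PiE {..<N} (\<lambda>_. {-1..1::real})"
  let ?K = "?C \<inter> {x \<in> topspace ?X. sqs N x \<in> {1}}"
  have proj: "continuous_map ?X euclideanreal (\<lambda>x. x i)" if "i < N" for i
    using continuous_map_product_projection[of i "{..<N}" "\<lambda>_. euclideanreal"] that by simp
  have csq: "continuous_map ?X euclideanreal (sqs N)"
    unfolding sqs_def power2_eq_square
    by (intro continuous_map_sum continuous_map_real_mult proj) auto
  have cq: "continuous_map ?X euclideanreal (\<lambda>v. qfm M N v v)"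
    unfolding qfm_def
    by (intro continuous_map_sum continuous_map_real_mult continuous_map_real_mult_left proj) auto
  have "compactin ?X ?C"
    by (subst compactin_PiE) (auto simp: compactin_euclidean_iff)
  moreover have "closedin ?X {x \<in> topspace ?X. sqs N x \<in> {1}}"
    by (rule closedin_continuous_map_preimage[OF csq]) auto
  ultimately have K: "compactin ?X ?K" by (rule compact_Int_closedin)
  define e0 where "e0 = restrict (\<lambda>i. if i = 0 then 1 else 0::real) {..<N}"
  have "sqs N e0 = (\<Sum>i<N. if i = 0 then 1 else 0)" unfolding sqs_def e0_def
    by (intro sum.cong) auto
  also have "\<dots> = 1" using N by simp
  finally have "sqs N e0 = 1" .
  then have e0K: "e0 \<in> ?K" unfolding e0_def by (auto simp: topspace_product_topology)
  define F where "F = (\<lambda>v. qfm M N v v)"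
  have cF: "compact (F ` ?K)"
    using image_compactin[OF K cq] by (simp add: compactin_euclidean_iff F_def)
  have neF: "F ` ?K \<noteq> {}"
  proof
    assume "F ` ?K = {}"
    hence "?K = {}" by (simp only: image_is_empty)
    thus False using e0K by (simp only: empty_iff)
  qed
  have "\<exists>s\<in>F ` ?K. \<forall>t\<in>F ` ?K. t \<le> s" by (rule compact_attains_sup[OF cF neF])
  then obtain s where s: "s \<in> F ` ?K" and smax: "\<forall>t\<in>F ` ?K. t \<le> s" ..
  from s obtain v0 where v0: "v0 \<in> ?K" "s = F v0" ..
  have v0s: "s = qfm M N v0 v0" using v0(2) unfolding F_def by simp
  show ?thesis
  proof (intro exI conjI allI impI)
    show "sqs N v0 = 1" using v0(1) by simp
    fix v assume v: "sqs N v = 1"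
    let ?w = "restrict v {..<N}"
    have sw: "sqs N ?w = 1" using v by (simp add: sqs_def)
    have "\<bar>v i\<bar> \<le> 1" if "i < N" for i
    proof -
      have "(v i)^2 \<le> 1" using sqs_le[OF that, of v] v by simp
      then show ?thesis by (metis abs_le_square_iff abs_one one_power2)
    qed
    then have "?w \<in> ?K" using sw by (auto simp: topspace_product_topology abs_le_iff)
    then have "F ?w \<le> s" using smax by (meson imageI)
    then have "qfm M N ?w ?w \<le> s" unfolding F_def .
    moreover have "qfm M N ?w ?w = qfm M N v v" by (rule qfm_cong) auto
    ultimately show "qfm M N v v \<le> qfm M N v0 v0" using v0s by simp
  qed
qed


lemma rayleigh_sum:
  assumes N: "N > 0" and sym: "\<And>i j. i < N \<Longrightarrow> j < N \<Longrightarrow> M i j = M j i"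
  shows "\<exists>m v0. sqs N v0 = 1 \<and> (\<forall>i<N. (\<Sum>j<N. M i j * v0 j) = m * v0 i)
      \<and> (\<forall>v. qfm M N v v \<le> m * sqs N v)"
proof -
  obtain v0 where v01: "sqs N v0 = 1" and vmax: "\<And>v. sqs N v = 1 \<Longrightarrow> qfm M N v v \<le> qfm M N v0 v0"
    using exists_max[OF N, of M] by blast
  define m where "m = qfm M N v0 v0"
  have bound: "qfm M N v v \<le> m * sqs N v" for v
  proof (cases "sqs N v = 0")
    case True
    then have "qfm M N v v = qfm M N (\<lambda>_. 0) (\<lambda>_. 0)" by (intro qfm_cong) (auto dest: sqs_zero)
    then show ?thesis using True by (simp add: qfm_def)
  next
    case False
    then have pos: "sqs N v > 0" using sqs_nonneg[of N v] by linarith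
    define c where "c = 1 / sqrt (sqs N v)"
    have c2: "c^2 = 1 / sqs N v" using pos by (simp add: c_def power_divide)
    have "sqs N (\<lambda>i. c * v i) = 1" using pos by (simp add: sqs_scale c2)
    then have "qfm M N (\<lambda>i. c * v i) (\<lambda>i. c * v i) \<le> m" using vmax m_def by simp
    then have "c * c * qfm M N v v \<le> m" by (simp add: qfm_scale)
    then have "qfm M N v v / sqs N v \<le> m" using c2 by (simp add: power2_eq_square)
    then show ?thesis using pos by (simp add: divide_le_eq mult.commute)
  qed
  define r where "r i = (\<Sum>j<N. M i j * v0 j) - m * v0 i" for i
  have key: "2 * e * sqs N r + e^2 * (qfm M N r r - m * sqs N r) \<le> 0" for e
  proof -
    let ?z = "\<lambda>i. v0 i + e * r i"
    have "qfm M N ?z ?z = qfm M N v0 v0 + e * qfm M N r v0 + e * (qfm M N v0 r + e * qfm M N r r)"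
      by (simp add: qfm_add_left qfm_add_right algebra_simps)
    also have "qfm M N v0 r = qfm M N r v0" by (rule qfm_sym[OF sym])
    finally have z1: "qfm M N ?z ?z = m + 2 * e * qfm M N r v0 + e^2 * qfm M N r r"
      by (simp add: m_def power2_eq_square algebra_simps)
    have z2: "sqs N ?z = 1 + 2 * e * (\<Sum>i<N. v0 i * r i) + e^2 * sqs N r"
      by (simp add: sqs_add v01)
    have "qfm M N r v0 - m * (\<Sum>i<N. v0 i * r i) = (\<Sum>i<N. r i * ((\<Sum>j<N. M i j * v0 j) - m * v0 i))"
      by (simp add: qfm_right sum_subtractf sum_distrib_left algebra_simps)
    also have "\<dots> = sqs N r" unfolding sqs_def r_def by (simp add: power2_eq_square)
    finally have z3: "qfm M N r v0 - m * (\<Sum>i<N. v0 i * r i) = sqs N r" .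
    have "qfm M N ?z ?z \<le> m * sqs N ?z" by (rule bound)
    then show ?thesis using z1 z2 z3
      by (simp add: algebra_simps)
  qed
  have "sqs N r = 0"
  proof (rule ccontr)
    assume "sqs N r \<noteq> 0"
    then have R: "sqs N r > 0" using sqs_nonneg[of N r] by linarith
    define C where "C = qfm M N r r - m * sqs N r"
    define e where "e = sqs N r / (\<bar>C\<bar> + 1)"
    have e: "e > 0" using R by (simp add: e_def)
    have "e * \<bar>C\<bar> \<le> sqs N r" using R
      by (simp add: e_def divide_le_eq) 
    moreover have "e * (- \<bar>C\<bar>) \<le> e * C" using e by (intro mult_left_mono) auto
    ultimately have "- sqs N r \<le> e * C" by linarith
    then have "e * (- sqs N r) \<le> e * (e * C)" using e by (intro mult_left_mono) auto
    moreover have "e * sqs N r > 0" using e R by simp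
    ultimately have "2 * e * sqs N r + e^2 * C > 0" by (simp add: power2_eq_square algebra_simps)
    then show False using key[of e] C_def by simp
  qed
  then have "\<forall>i<N. r i = 0" using sqs_zero by blast
  then show ?thesis using v01 bound unfolding r_def by (intro exI[of _ m] exI[of _ v0]) auto
qed


lemma lambda_max_ge:
  assumes A: "Mm \<in> carrier_mat N N" and ev: "eigenvalue Mm (m::real)"
  shows "m \<le> lambda_max Mm"
proof -
  have "char_poly Mm \<noteq> 0" using degree_monic_char_poly[OF A] by auto
  then have "finite {k. poly (char_poly Mm) k = 0}" by (rule poly_roots_finite)
  then have fin: "finite {k. eigenvalue Mm k}" using eigenvalue_root_char_poly[OF A] by simp
  show ?thesis unfolding lambda_max_def using ev by (intro Max_ge[OF fin]) simp
qed

lemma scalar_mult_qfm: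
  assumes A: "Mm \<in> carrier_mat N N" and v: "v \<in> carrier_vec N"
  shows "v \<bullet> (Mm *\<^sub>v v) = qfm (\<lambda>i j. Mm $$ (i,j)) N (\<lambda>i. v $ i) (\<lambda>i. v $ i)"
proof -
  have "v \<bullet> (Mm *\<^sub>v v) = (\<Sum>i<N. v $ i * (\<Sum>j<N. Mm $$ (i,j) * v $ j))"
    unfolding scalar_prod_def using A v
    by (auto simp: atLeast0LessThan scalar_prod_def intro!: sum.cong)
  also have "\<dots> = qfm (\<lambda>i j. Mm $$ (i,j)) N (\<lambda>i. v $ i) (\<lambda>i. v $ i)"
    unfolding qfm_def by (simp add: sum_distrib_left algebra_simps)
  finally show ?thesis .
qed

lemma scalar_self_sqs:
  assumes v: "v \<in> carrier_vec N"
  shows "v \<bullet> v = sqs N (\<lambda>i. v $ i)"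
  using v unfolding scalar_prod_def sqs_def by (simp add: atLeast0LessThan power2_eq_square)

lemma rayleigh_mat:
  assumes A: "Mm \<in> carrier_mat N N" and N: "N > 0"
    and sym: "\<And>i j. i < N \<Longrightarrow> j < N \<Longrightarrow> Mm $$ (i,j) = Mm $$ (j,i)"
  shows "\<forall>v\<in>carrier_vec N. v \<bullet> (Mm *\<^sub>v v) \<le> lambda_max Mm * (v \<bullet> v)"
    and "\<forall>i<N. Mm $$ (i,i) \<le> lambda_max Mm"
proof -
  obtain m v0 where v01: "sqs N v0 = 1" and eig: "\<forall>i<N. (\<Sum>j<N. Mm $$ (i,j) * v0 j) = m * v0 i"
    and bnd: "\<forall>v. qfm (\<lambda>i j. Mm $$ (i,j)) N v v \<le> m * sqs N v"
    using rayleigh_sum[OF N, of "\<lambda>i j. Mm $$ (i,j)"] sym by blast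
  have "eigenvector Mm (vec N v0) m"
    unfolding eigenvector_def
  proof (intro conjI)
    show "vec N v0 \<in> carrier_vec (dim_row Mm)" using A by simp
    show "vec N v0 \<noteq> 0\<^sub>v (dim_row Mm)"
    proof
      assume "vec N v0 = 0\<^sub>v (dim_row Mm)"
      then have "\<forall>i<N. v0 i = 0" using A by (metis carrier_matD(1) index_vec index_zero_vec(1))
      then have "sqs N v0 = 0" unfolding sqs_def by simp
      then show False using v01 by simp
    qed
    show "Mm *\<^sub>v vec N v0 = m \<cdot>\<^sub>v vec N v0"
    proof (rule eq_vecI)
      fix i assume "i < dim_vec (m \<cdot>\<^sub>v vec N v0)"
      then have i: "i < N" by simp
      have "(Mm *\<^sub>v vec N v0) $ i = (\<Sum>j<N. Mm $$ (i,j) * v0 j)"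
        using A i by (auto simp: scalar_prod_def atLeast0LessThan intro!: sum.cong)
      then show "(Mm *\<^sub>v vec N v0) $ i = (m \<cdot>\<^sub>v vec N v0) $ i" using eig i by simp
    qed (use A in simp)
  qed
  then have "eigenvalue Mm m" unfolding eigenvalue_def by blast
  then have mle: "m \<le> lambda_max Mm" by (rule lambda_max_ge[OF A])
  show "\<forall>v\<in>carrier_vec N. v \<bullet> (Mm *\<^sub>v v) \<le> lambda_max Mm * (v \<bullet> v)"
  proof
    fix v :: "real vec" assume v: "v \<in> carrier_vec N"
    have "v \<bullet> (Mm *\<^sub>v v) \<le> m * (v \<bullet> v)"
      using bnd scalar_mult_qfm[OF A v] scalar_self_sqs[OF v] by simp
    also have "\<dots> \<le> lambda_max Mm * (v \<bullet> v)"
      using mle scalar_self_sqs[OF v] sqs_nonneg by (intro mult_right_mono) auto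
    finally show "v \<bullet> (Mm *\<^sub>v v) \<le> lambda_max Mm * (v \<bullet> v)" .
  qed
  show "\<forall>i<N. Mm $$ (i,i) \<le> lambda_max Mm"
  proof (intro allI impI)
    fix i assume i: "i < N"
    let ?e = "\<lambda>k. if k = i then 1 else 0::real"
    have inner: "(\<Sum>j<N. Mm $$ (k,j) * ?e k * ?e j) = (if k = i then Mm $$ (i,i) else 0)" for k
    proof (cases "k = i")
      case True
      have "(\<Sum>j<N. Mm $$ (k,j) * ?e k * ?e j) = (\<Sum>j<N. if j = i then Mm $$ (i,i) else 0)"
        using True by (intro sum.cong) auto
      also have "\<dots> = Mm $$ (i,i)" using i by simp
      finally show ?thesis using True by simp
    qed simp
    have "qfm (\<lambda>i j. Mm $$ (i,j)) N ?e ?e = Mm $$ (i,i)"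
      unfolding qfm_def inner using i by simp
    moreover have "sqs N ?e = 1"
    proof -
      have "sqs N ?e = (\<Sum>j<N. if j = i then 1 else 0)" unfolding sqs_def by (intro sum.cong) auto
      then show ?thesis using i by simp
    qed
    ultimately have "Mm $$ (i,i) \<le> m" using bnd by (metis mult.right_neutral)
    then show "Mm $$ (i,i) \<le> lambda_max Mm" using mle by simp
  qed
qed


lemma right_deriv_mono_eps:
  fixes f :: "real \<Rightarrow> real"
  assumes ab: "a \<le> b" and cont: "continuous_on {a..b} f"
    and der: "\<And>x. a \<le> x \<Longrightarrow> x < b \<Longrightarrow> \<exists>D. (f has_real_derivative D) (at x within {x..}) \<and> D \<le> 0"
    and e: "e > 0"
  shows "f b \<le> f a + e * (b - a)"
proof -
  define g where "g x = f x - f a - e * (x - a)" for x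
  have gc: "continuous_on {a..b} g" unfolding g_def by (intro continuous_intros cont)
  define T where "T = {a..b} \<inter> g -` {..0}"
  have "closed T" unfolding T_def by (rule continuous_closed_preimage[OF gc]) auto
  then have "compact (T \<inter> {a..b})" by (rule closed_Int_compact[OF _ compact_Icc])
  moreover have "T \<inter> {a..b} = T" unfolding T_def by auto
  ultimately have "compact T" by simp
  have aT: "a \<in> T" unfolding T_def g_def using ab by simp
  obtain c where cT: "c \<in> T" and cmax: "\<And>y. y \<in> T \<Longrightarrow> y \<le> c"
    using compact_attains_sup[of T] \<open>compact T\<close> aT by blast
  have "c = b"
  proof (rule ccontr)
    assume "c \<noteq> b"
    then have cb: "c < b" and ac: "a \<le> c" using cT unfolding T_def by auto
    obtain D where D: "(f has_real_derivative D) (at c within {c..})" and D0: "D \<le> 0"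
      using der[OF ac cb] by blast
    have "(g has_real_derivative (D - e)) (at c within {c..})"
      unfolding g_def by (auto intro!: derivative_eq_intros D)
    then have "((\<lambda>y. (g y - g c) / (y - c)) \<longlongrightarrow> D - e) (at c within {c..})"
      by (simp add: has_field_derivative_iff)
    then have "eventually (\<lambda>y. (g y - g c) / (y - c) < 0) (at c within {c..})"
      using D0 e by (intro order_tendstoD(2)) auto
    then have "eventually (\<lambda>y. (g y - g c) / (y - c) < 0) (at_right c)"
      by (simp add: at_within_Ici_at_right)
    then obtain b' where b': "b' > c" "\<And>y. y > c \<Longrightarrow> y < b' \<Longrightarrow> (g y - g c) / (y - c) < 0"
      unfolding eventually_at_right_field by blast
    define y where "y = (c + min b b') / 2"
    have y: "c < y" "y < b" "y < b'" using b' cb unfolding y_def by auto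
    have "(g y - g c) / (y - c) < 0" using b'(2) y by auto
    then have "g y < g c" using y by (simp add: divide_less_0_iff)
    moreover have "g c \<le> 0" using cT unfolding T_def by auto
    ultimately have "y \<in> T" unfolding T_def using y ac by auto
    then show False using cmax[of y] y by simp
  qed
  then have "g b \<le> 0" using cT unfolding T_def by auto
  then show ?thesis unfolding g_def by simp
qed

lemma right_deriv_mono:
  fixes f :: "real \<Rightarrow> real"
  assumes ab: "a \<le> b" and cont: "continuous_on {a..b} f"
    and der: "\<And>x. a \<le> x \<Longrightarrow> x < b \<Longrightarrow> \<exists>D. (f has_real_derivative D) (at x within {x..}) \<and> D \<le> 0"
  shows "f b \<le> f a"
proof (rule ccontr)
  assume "\<not> f b \<le> f a"
  then have fb: "f b - f a > 0" by simp
  then have "a < b" using ab by (cases "a = b") auto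
  define e where "e = (f b - f a) / (2 * (b - a))"
  have e: "e > 0" using fb \<open>a < b\<close> by (simp add: e_def)
  have "f b \<le> f a + e * (b - a)" by (rule right_deriv_mono_eps[OF ab cont der e])
  moreover have "e * (b - a) = (f b - f a) / 2" using \<open>a < b\<close> by (simp add: e_def field_simps)
  ultimately show False using fb by argo
qed

lemma qfm_symmetrize: "qfm (\<lambda>i j. (1/2) * (M i j + M j i)) N v v = qfm M N v v"
proof -
  have s: "(\<Sum>i<N. \<Sum>j<N. M j i * v i * v j) = (\<Sum>i<N. \<Sum>j<N. M i j * v i * v j)"
    by (subst sum.swap) (simp add: algebra_simps)
  have "qfm (\<lambda>i j. (1/2) * (M i j + M j i)) N v v
     = (1/2) * ((\<Sum>i<N. \<Sum>j<N. M i j * v i * v j) + (\<Sum>i<N. \<Sum>j<N. M j i * v i * v j))"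
    unfolding qfm_def by (simp add: algebra_simps sum.distrib sum_distrib_left)
  then show ?thesis unfolding s qfm_def by simp
qed

lemma atil_props:
  assumes Ac: "Ac \<in> carrier_mat (nx n) (nx n)" and Bc: "Bc \<in> carrier_mat (nx n) (nu n)"
  shows "lognorm (Atil n Ac Bc) \<ge> 0"
    and "\<forall>v\<in>carrier_vec (nx n + nu n). v \<bullet> (Atil n Ac Bc *\<^sub>v v) \<le> lognorm (Atil n Ac Bc) * (v \<bullet> v)"
proof -
  define NN where "NN = nx n + nu n"
  define A where "A = Atil n Ac Bc"
  have A: "A \<in> carrier_mat NN NN" unfolding A_def Atil_def NN_def using Ac Bc by auto
  define Mm where "Mm = (1/2) \<cdot>\<^sub>m (A + transpose_mat A)"
  have Mm: "Mm \<in> carrier_mat NN NN" unfolding Mm_def using A by auto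
  have Mij: "Mm $$ (i,j) = (1/2) * (A $$ (i,j) + A $$ (j,i))" if "i < NN" "j < NN" for i j
    unfolding Mm_def using A that by auto
  have N: "NN > 0" unfolding NN_def nu_def by simp
  have symm: "Mm $$ (i,j) = Mm $$ (j,i)" if "i < NN" "j < NN" for i j
    using Mij[OF that] Mij[OF that(2,1)] by simp
  have ln: "lognorm A = lambda_max Mm" unfolding lognorm_def Mm_def ..
  have R1: "\<forall>v\<in>carrier_vec NN. v \<bullet> (Mm *\<^sub>v v) \<le> lambda_max Mm * (v \<bullet> v)"
    by (rule rayleigh_mat(1)[OF Mm N]) (rule symm)
  have R2: "\<forall>i<NN. Mm $$ (i,i) \<le> lambda_max Mm"
    by (rule rayleigh_mat(2)[OF Mm N]) (rule symm)
  have "A $$ (NN - 1, NN - 1) = 0"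
    unfolding A_def Atil_def using Ac Bc by (auto simp: NN_def nu_def nx_def)
  then have "Mm $$ (NN - 1, NN - 1) = 0" using Mij[of "NN - 1" "NN - 1"] N by simp
  then show "lognorm (Atil n Ac Bc) \<ge> 0" 
  proof -
    have "NN - 1 < NN" using N by simp
    then have "Mm $$ (NN - 1, NN - 1) \<le> lambda_max Mm" using R2 by blast
    then show ?thesis using \<open>Mm $$ (NN - 1, NN - 1) = 0\<close> ln A_def by simp
  qed
  show "\<forall>v\<in>carrier_vec (nx n + nu n). v \<bullet> (Atil n Ac Bc *\<^sub>v v) \<le> lognorm (Atil n Ac Bc) * (v \<bullet> v)"
  proof
    fix v :: "real vec" assume "v \<in> carrier_vec (nx n + nu n)"
    then have v: "v \<in> carrier_vec NN" unfolding NN_def .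
    have "v \<bullet> (Mm *\<^sub>v v) = qfm (\<lambda>i j. Mm $$ (i,j)) NN (\<lambda>i. v $ i) (\<lambda>i. v $ i)"
      by (rule scalar_mult_qfm[OF Mm v])
    also have "\<dots> = qfm (\<lambda>i j. (1/2) * (A $$ (i,j) + A $$ (j,i))) NN (\<lambda>i. v $ i) (\<lambda>i. v $ i)"
      unfolding qfm_def by (intro sum.cong refl) (simp add: Mij)
    also have "\<dots> = qfm (\<lambda>i j. A $$ (i,j)) NN (\<lambda>i. v $ i) (\<lambda>i. v $ i)"
      by (rule qfm_symmetrize)
    also have "\<dots> = v \<bullet> (A *\<^sub>v v)" by (rule scalar_mult_qfm[OF A v, symmetric])
    finally have "v \<bullet> (A *\<^sub>v v) = v \<bullet> (Mm *\<^sub>v v)" by simp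
    then show "v \<bullet> (Atil n Ac Bc *\<^sub>v v) \<le> lognorm (Atil n Ac Bc) * (v \<bullet> v)"
      using R1 v ln unfolding A_def by simp
  qed
qed

lemma vnorm_sp: "vnorm v = sqrt (v \<bullet> v)"
  unfolding vnorm_def scalar_prod_def by (simp add: atLeast0LessThan power2_eq_square)

lemma vnorm_nonneg: "vnorm v \<ge> 0"
  unfolding vnorm_def by (simp add: sum_nonneg)

lemma cs_vec:
  assumes v: "v \<in> carrier_vec m" and w: "w \<in> carrier_vec m"
  shows "\<bar>v \<bullet> w\<bar> \<le> vnorm v * vnorm w"
proof -
  have "(v \<bullet> w)^2 \<le> (\<Sum>i\<in>{0..<m}. (v $ i)^2) * (\<Sum>i\<in>{0..<m}. (w $ i)^2)"
    using v w unfolding scalar_prod_def by (simp add: Cauchy_Schwarz_ineq_sum)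
  also have "\<dots> = (v \<bullet> v) * (w \<bullet> w)"
    using v w unfolding scalar_prod_def by (simp add: power2_eq_square)
  finally have "sqrt ((v \<bullet> w)^2) \<le> sqrt ((v \<bullet> v) * (w \<bullet> w))" by (rule real_sqrt_le_mono)
  then show ?thesis by (simp add: vnorm_sp real_sqrt_mult)
qed

lemma b1_carrier: "b1 n \<in> carrier_mat (nx n + nu n) (nx n)"
  unfolding b1_def by simp
lemma b2_carrier: "b2 n \<in> carrier_mat (nx n + nu n) (nu n)"
  unfolding b2_def by simp

lemma b1T_mult:
  assumes x: "xv \<in> carrier_vec (nx n)" and u: "uv \<in> carrier_vec (nu n)"
  shows "transpose_mat (b1 n) *\<^sub>v (xv @\<^sub>v uv) = xv"
proof (rule eq_vecI)
  fix i assume "i < dim_vec xv"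
  then have i: "i < nx n" using x by simp
  have "(transpose_mat (b1 n) *\<^sub>v (xv @\<^sub>v uv)) $ i
      = (\<Sum>c\<in>{0..<nx n + nu n}. (if c = i then 1 else 0) * (xv @\<^sub>v uv) $ c)"
    using i x u by (auto simp: b1_def scalar_prod_def intro!: sum.cong)
  also have "\<dots> = (\<Sum>c\<in>{0..<nx n + nu n}. if c = i then (xv @\<^sub>v uv) $ i else 0)"
    by (intro sum.cong) auto
  also have "\<dots> = (xv @\<^sub>v uv) $ i" using i by simp
  also have "\<dots> = xv $ i" using i x u by simp
  finally show "(transpose_mat (b1 n) *\<^sub>v (xv @\<^sub>v uv)) $ i = xv $ i" .
qed (use x in \<open>simp add: b1_def\<close>)

lemma b2T_mult:
  assumes x: "xv \<in> carrier_vec (nx n)" and u: "uv \<in> carrier_vec (nu n)"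
  shows "transpose_mat (b2 n) *\<^sub>v (xv @\<^sub>v uv) = uv"
proof (rule eq_vecI)
  fix i assume "i < dim_vec uv"
  then have i: "i < nu n" using u by simp
  have "(transpose_mat (b2 n) *\<^sub>v (xv @\<^sub>v uv)) $ i
      = (\<Sum>c\<in>{0..<nx n + nu n}. (if c = nx n + i then 1 else 0) * (xv @\<^sub>v uv) $ c)"
    using i x u by (auto simp: b2_def scalar_prod_def intro!: sum.cong)
  also have "\<dots> = (\<Sum>c\<in>{0..<nx n + nu n}. if c = nx n + i then (xv @\<^sub>v uv) $ (nx n + i) else 0)"
    by (intro sum.cong) auto
  also have "\<dots> = (xv @\<^sub>v uv) $ (nx n + i)" using i by simp
  also have "\<dots> = uv $ i" using i x u by simp
  finally show "(transpose_mat (b2 n) *\<^sub>v (xv @\<^sub>v uv)) $ i = uv $ i" .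
qed (use u in \<open>simp add: b2_def\<close>)

lemma C_mult:
  assumes Ac: "Ac \<in> carrier_mat (nx n) (nx n)" and Bc: "Bc \<in> carrier_mat (nx n) (nu n)"
    and x: "xv \<in> carrier_vec (nx n)" and u: "uv \<in> carrier_vec (nu n)"
  shows "(Ac * transpose_mat (b1 n) + Bc * transpose_mat (b2 n)) *\<^sub>v (xv @\<^sub>v uv) = Ac *\<^sub>v xv + Bc *\<^sub>v uv"
proof -
  have c1: "transpose_mat (b1 n) \<in> carrier_mat (nx n) (nx n + nu n)" using b1_carrier by simp
  have c2: "transpose_mat (b2 n) \<in> carrier_mat (nu n) (nx n + nu n)" using b2_carrier by simp
  have X: "xv @\<^sub>v uv \<in> carrier_vec (nx n + nu n)" using x u by simp
  have "(Ac * transpose_mat (b1 n) + Bc * transpose_mat (b2 n)) *\<^sub>v (xv @\<^sub>v uv)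
     = (Ac * transpose_mat (b1 n)) *\<^sub>v (xv @\<^sub>v uv) + (Bc * transpose_mat (b2 n)) *\<^sub>v (xv @\<^sub>v uv)"
    using Ac Bc c1 c2 X by (intro add_mult_distrib_mat_vec) auto
  also have "\<dots> = Ac *\<^sub>v xv + Bc *\<^sub>v uv"
    using Ac Bc c1 c2 X b1T_mult[OF x u] b2T_mult[OF x u] by simp
  finally show ?thesis .
qed

lemma Atil_mult:
  assumes Ac: "Ac \<in> carrier_mat (nx n) (nx n)" and Bc: "Bc \<in> carrier_mat (nx n) (nu n)"
    and x: "xv \<in> carrier_vec (nx n)" and u: "uv \<in> carrier_vec (nu n)"
  shows "(xv @\<^sub>v uv) \<bullet> (Atil n Ac Bc *\<^sub>v (xv @\<^sub>v uv)) = xv \<bullet> (Ac *\<^sub>v xv + Bc *\<^sub>v uv)"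
proof -
  have "Atil n Ac Bc *\<^sub>v (xv @\<^sub>v uv) = (Ac *\<^sub>v xv + Bc *\<^sub>v uv) @\<^sub>v (0\<^sub>m (nu n) (nx n) *\<^sub>v xv + 0\<^sub>m (nu n) (nu n) *\<^sub>v uv)"
    unfolding Atil_def by (rule four_block_mat_mult_vec[OF Ac Bc _ _ x u]) auto
  also have "0\<^sub>m (nu n) (nx n) *\<^sub>v xv + 0\<^sub>m (nu n) (nu n) *\<^sub>v uv = 0\<^sub>v (nu n)"
    using x u by auto
  finally have e: "Atil n Ac Bc *\<^sub>v (xv @\<^sub>v uv) = (Ac *\<^sub>v xv + Bc *\<^sub>v uv) @\<^sub>v 0\<^sub>v (nu n)" .
  have "(xv @\<^sub>v uv) \<bullet> ((Ac *\<^sub>v xv + Bc *\<^sub>v uv) @\<^sub>v 0\<^sub>v (nu n)) = xv \<bullet> (Ac *\<^sub>v xv + Bc *\<^sub>v uv) + uv \<bullet> 0\<^sub>v (nu n)"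
    using Ac Bc x u by (intro scalar_prod_append) auto
  then show ?thesis using e u by simp
qed

lemma norm_growth:
  fixes x :: "real \<Rightarrow> real vec"
  assumes Ac: "Ac \<in> carrier_mat (nx n) (nx n)" and Bc: "Bc \<in> carrier_mat (nx n) (nu n)"
    and x_dim: "\<forall>s\<ge>0. x s \<in> carrier_vec (nx n)"
    and x_cont: "\<forall>j<nx n. continuous_on {0..} (\<lambda>s. x s $ j)"
    and uk: "uk \<in> carrier_vec (nu n)"
    and a0: "0 \<le> a" and ar: "a \<le> r" and rb: "r < b"
    and dyn: "\<And>r j. a \<le> r \<Longrightarrow> r < b \<Longrightarrow> j < nx n \<Longrightarrow>
        ((\<lambda>r. x r $ j) has_real_derivative ((Ac *\<^sub>v x r + Bc *\<^sub>v uk) $ j)) (at r within {r..})"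
  shows "vnorm (x r @\<^sub>v uk) \<le> exp (lognorm (Atil n Ac Bc) * (r - a)) * vnorm (x a @\<^sub>v uk)"
proof -
  define \<mu> where "\<mu> = lognorm (Atil n Ac Bc)"
  define F where "F r = Ac *\<^sub>v x r + Bc *\<^sub>v uk" for r
  define E where "E r = (\<Sum>j<nx n. x r $ j * x r $ j) + (\<Sum>j<nu n. uk $ j * uk $ j)" for r
  have XX: "(x r @\<^sub>v uk) \<bullet> (x r @\<^sub>v uk) = E r" if "r \<ge> 0" for r
  proof -
    have xr: "x r \<in> carrier_vec (nx n)" using x_dim that by simp
    have "(x r @\<^sub>v uk) \<bullet> (x r @\<^sub>v uk) = x r \<bullet> x r + uk \<bullet> uk"
      using xr uk by (intro scalar_prod_append) auto
    then show ?thesis unfolding E_def scalar_prod_def using xr uk by (simp add: atLeast0LessThan)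
  qed
  have xAx: "x r \<bullet> F r \<le> \<mu> * E r" if "r \<ge> 0" for r
  proof -
    have xr: "x r \<in> carrier_vec (nx n)" using x_dim that by simp
    have "x r \<bullet> F r = (x r @\<^sub>v uk) \<bullet> (Atil n Ac Bc *\<^sub>v (x r @\<^sub>v uk))"
      unfolding F_def by (rule Atil_mult[OF Ac Bc xr uk, symmetric])
    also have "\<dots> \<le> \<mu> * ((x r @\<^sub>v uk) \<bullet> (x r @\<^sub>v uk))"
      unfolding \<mu>_def using atil_props(2)[OF Ac Bc] xr uk by simp
    finally show ?thesis using XX[OF that] by simp
  qed
  have Ederiv: "(E has_real_derivative 2 * (x r \<bullet> F r)) (at r within {r..})" if "a \<le> r" "r < b" for r
  proof -
    have xr: "x r \<in> carrier_vec (nx n)" using x_dim that a0 by simp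
    have F: "F r \<in> carrier_vec (nx n)" unfolding F_def using Ac Bc xr uk by auto
    have dj: "((\<lambda>r. x r $ j * x r $ j) has_real_derivative F r $ j * x r $ j + F r $ j * x r $ j) (at r within {r..})"
      if "j \<in> {..<nx n}" for j
      using DERIV_mult[OF dyn[OF \<open>a \<le> r\<close> \<open>r < b\<close>] dyn[OF \<open>a \<le> r\<close> \<open>r < b\<close>], of j j] that
      unfolding F_def by simp
    have "(E has_real_derivative (\<Sum>j<nx n. F r $ j * x r $ j + F r $ j * x r $ j) + 0) (at r within {r..})"
      unfolding E_def by (intro DERIV_add DERIV_sum DERIV_const dj)
    moreover have "(\<Sum>j<nx n. F r $ j * x r $ j + F r $ j * x r $ j) + 0 = 2 * (x r \<bullet> F r)"
      using F unfolding scalar_prod_def by (simp add: atLeast0LessThan sum_distrib_left algebra_simps)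
    ultimately show ?thesis by simp
  qed
  have Econt: "continuous_on {a..r} E"
  proof -
    have "continuous_on {a..r} (\<lambda>s. x s $ j)" if "j < nx n" for j
      using x_cont that a0 by (meson atLeastAtMost_iff atLeast_iff continuous_on_subset order_trans subsetI)
    then show ?thesis unfolding E_def by (intro continuous_intros) auto
  qed
  define g where "g s = exp (- (2 * \<mu>) * (s - a)) * E s" for s
  have "g r \<le> g a"
  proof (rule right_deriv_mono[OF ar])
    show "continuous_on {a..r} g" unfolding g_def by (intro continuous_intros Econt)
    fix s assume s: "a \<le> s" "s < r"
    then have sb: "s < b" using rb by simp
    have "(g has_real_derivative exp (- (2 * \<mu>) * (s - a)) * (- (2 * \<mu>)) * E s + exp (- (2 * \<mu>) * (s - a)) * (2 * (x s \<bullet> F s))) (at s within {s..})"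
      unfolding g_def by (auto intro!: derivative_eq_intros Ederiv[OF s(1) sb])
    moreover have "exp (- (2 * \<mu>) * (s - a)) * (- (2 * \<mu>)) * E s + exp (- (2 * \<mu>) * (s - a)) * (2 * (x s \<bullet> F s)) \<le> 0"
    proof -
      have "x s \<bullet> F s - \<mu> * E s \<le> 0" using xAx[of s] s a0 by simp
      then have "exp (- (2 * \<mu>) * (s - a)) * (2 * (x s \<bullet> F s - \<mu> * E s)) \<le> 0"
        by (simp add: mult_nonneg_nonpos)
      then show ?thesis by (simp add: algebra_simps)
    qed
    ultimately show "\<exists>D. (g has_real_derivative D) (at s within {s..}) \<and> D \<le> 0" by blast
  qed
  then have "exp (- (2 * \<mu>) * (r - a)) * E r \<le> E a" unfolding g_def by simp
  then have "exp (2 * \<mu> * (r - a)) * (exp (- (2 * \<mu>) * (r - a)) * E r) \<le> exp (2 * \<mu> * (r - a)) * E a"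
    by (intro mult_left_mono) auto
  then have Er: "E r \<le> exp (2 * \<mu> * (r - a)) * E a" by (simp add: mult.assoc[symmetric] exp_add[symmetric])
  have "vnorm (x r @\<^sub>v uk) = sqrt (E r)" using XX[of r] a0 ar by (simp add: vnorm_sp)
  also have "\<dots> \<le> sqrt (exp (2 * \<mu> * (r - a)) * E a)" using Er by simp
  also have "\<dots> = exp (\<mu> * (r - a)) * sqrt (E a)"
  proof -
    have "exp (2 * \<mu> * (r - a)) = (exp (\<mu> * (r - a)))^2"
      by (simp add: power2_eq_square exp_add[symmetric])
    then show ?thesis by (simp add: real_sqrt_mult)
  qed
  also have "sqrt (E a) = vnorm (x a @\<^sub>v uk)" using XX[of a] a0 by (simp add: vnorm_sp)
  finally show ?thesis unfolding \<mu>_def .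
qed

lemma core:
  fixes x :: "real \<Rightarrow> real vec"
  assumes Ac: "Ac \<in> carrier_mat (nx n) (nx n)" and Bc: "Bc \<in> carrier_mat (nx n) (nu n)"
    and x_dim: "\<forall>s\<ge>0. x s \<in> carrier_vec (nx n)"
    and x_cont: "\<forall>j<nx n. continuous_on {0..} (\<lambda>s. x s $ j)"
    and uk: "uk \<in> carrier_vec (nu n)"
    and a0: "0 \<le> a" and as: "a \<le> s" and sb: "s < b"
    and dyn: "\<And>r j. a \<le> r \<Longrightarrow> r < b \<Longrightarrow> j < nx n \<Longrightarrow>
        ((\<lambda>r. x r $ j) has_real_derivative ((Ac *\<^sub>v x r + Bc *\<^sub>v uk) $ j)) (at r within {r..})"
    and i: "i \<in> {2..n}"
    and alpha: "\<alpha> > 0"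
    and trig: "phi n Ac Bc * vnorm (x a @\<^sub>v uk) \<noteq> 0 \<longrightarrow>
        b - a \<le> ln (lognorm (Atil n Ac Bc) * \<alpha> / (phi n Ac Bc * vnorm (x a @\<^sub>v uk)) + 1)
                           / lognorm (Atil n Ac Bc)"
  shows "\<bar>dist_i n L i (x s) - dist_i n L i (x a)\<bar> \<le> \<alpha>"
proof -
  define \<mu> where "\<mu> = lognorm (Atil n Ac Bc)"
  define P where "P = phi n Ac Bc"
  define N0 where "N0 = vnorm (x a @\<^sub>v uk)"
  define F where "F r = Ac *\<^sub>v x r + Bc *\<^sub>v uk" for r
  define q where "q = qv n i"
  define C where "C = Ac * transpose_mat (b1 n) + Bc * transpose_mat (b2 n)"
  define w where "w = transpose_mat C *\<^sub>v q"
  have q: "q \<in> carrier_vec (nx n)" unfolding q_def qv_def by simp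
  have Cc: "C \<in> carrier_mat (nx n) (nx n + nu n)" unfolding C_def using Ac Bc b1_carrier b2_carrier by auto
  have w: "w \<in> carrier_vec (nx n + nu n)" unfolding w_def using Cc q by auto
  have wP: "vnorm w \<le> P"
    unfolding P_def phi_def w_def C_def q_def using i by (intro Max_ge) auto
  have P0: "P \<ge> 0" using wP vnorm_nonneg[of w] by linarith
  have N00: "N0 \<ge> 0" unfolding N0_def by (rule vnorm_nonneg)
  have mu0: "\<mu> \<ge> 0" unfolding \<mu>_def by (rule atil_props(1)[OF Ac Bc])
  have dbound: "\<bar>q \<bullet> F r\<bar> \<le> P * N0 * exp (\<mu> * (r - a))" if "a \<le> r" "r < b" for r
  proof -
    have xr: "x r \<in> carrier_vec (nx n)" using x_dim that a0 by simp
    have X: "x r @\<^sub>v uk \<in> carrier_vec (nx n + nu n)" using xr uk by simp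
    have "q \<bullet> F r = q \<bullet> (C *\<^sub>v (x r @\<^sub>v uk))" unfolding F_def C_def using C_mult[OF Ac Bc xr uk] by simp
    also have "\<dots> = w \<bullet> (x r @\<^sub>v uk)" unfolding w_def by (rule transpose_vec_mult_scalar[OF Cc X q, symmetric])
    finally have "\<bar>q \<bullet> F r\<bar> \<le> vnorm w * vnorm (x r @\<^sub>v uk)" using cs_vec[OF w X] by simp
    also have "\<dots> \<le> P * (exp (\<mu> * (r - a)) * N0)"
      using norm_growth[OF Ac Bc x_dim x_cont uk a0 that(1) that(2) dyn] wP P0 vnorm_nonneg
      unfolding \<mu>_def N0_def by (intro mult_mono) auto
    finally show ?thesis by (simp add: algebra_simps)
  qed
  define Df where "Df r = (\<Sum>j<nx n. q $ j * x r $ j)" for r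
  have Dfeq: "dist_i n L i (x r) = Df r - L i" if "r \<ge> 0" for r
  proof -
    have "dim_vec (x r) = nx n" using x_dim that by simp
    then show ?thesis unfolding dist_i_def Df_def q_def scalar_prod_def by (simp add: atLeast0LessThan)
  qed
  have Dfder: "(Df has_real_derivative q \<bullet> F r) (at r within {r..})" if "a \<le> r" "r < b" for r
  proof -
    have xr: "x r \<in> carrier_vec (nx n)" using x_dim that a0 by simp
    have Fr: "F r \<in> carrier_vec (nx n)" unfolding F_def using Ac Bc xr uk by auto
    have "(Df has_real_derivative (\<Sum>j<nx n. q $ j * F r $ j)) (at r within {r..})"
      unfolding Df_def F_def by (intro DERIV_sum DERIV_cmult dyn[OF that]) auto
    moreover have "(\<Sum>j<nx n. q $ j * F r $ j) = q \<bullet> F r"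
      using Fr unfolding scalar_prod_def by (simp add: atLeast0LessThan)
    ultimately show ?thesis by simp
  qed
  have Dfcont: "continuous_on {a..s} Df"
  proof -
    have "continuous_on {a..s} (\<lambda>r. x r $ j)" if "j < nx n" for j
      using x_cont that a0 by (meson atLeastAtMost_iff atLeast_iff continuous_on_subset order_trans subsetI)
    then show ?thesis unfolding Df_def by (intro continuous_intros) auto
  qed
  have "\<bar>Df s - Df a\<bar> \<le> \<alpha>"
  proof (cases "P * N0 = 0")
    case True
    have d0: "q \<bullet> F r = 0" if "a \<le> r" "r < b" for r
      using dbound[OF that] True by simp
    have "Df s \<le> Df a"
    proof (rule right_deriv_mono[OF as Dfcont])
      fix r assume "a \<le> r" "r < s"
      then show "\<exists>D. (Df has_real_derivative D) (at r within {r..}) \<and> D \<le> 0"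
        using Dfder[of r] d0[of r] sb by force
    qed
    moreover have "- Df s \<le> - Df a"
    proof (rule right_deriv_mono[OF as])
      show "continuous_on {a..s} (\<lambda>r. - Df r)" by (intro continuous_intros Dfcont)
      fix r assume r: "a \<le> r" "r < s"
      then have "((\<lambda>r. - Df r) has_real_derivative - (q \<bullet> F r)) (at r within {r..})"
        using Dfder[of r] sb by (intro DERIV_minus) auto
      then show "\<exists>D. ((\<lambda>r. - Df r) has_real_derivative D) (at r within {r..}) \<and> D \<le> 0"
        using d0[of r] r sb by force
    qed
    ultimately show ?thesis using alpha by simp
  next
    case False
    then have K: "P * N0 > 0" using P0 N00 by (simp add: less_le)
    have tb: "b - a \<le> ln (\<mu> * \<alpha> / (P * N0) + 1) / \<mu>"
      using trig False unfolding \<mu>_def P_def N0_def by simp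
    have mupos: "\<mu> > 0"
    proof (rule ccontr)
      assume "\<not> \<mu> > 0"
      then have "\<mu> = 0" using mu0 by simp
      then show False using tb as sb by simp
    qed
    define z where "z = \<mu> * \<alpha> / (P * N0) + 1"
    have z1: "z > 1" unfolding z_def using mupos alpha K by simp
    have "b - a \<le> ln z / \<mu>" using tb unfolding z_def .
    then have "(b - a) * \<mu> \<le> ln z" by (simp only: pos_le_divide_eq[OF mupos])
    then have "\<mu> * (b - a) \<le> ln z" by (simp only: mult.commute)
    then have "exp (\<mu> * (b - a)) \<le> exp (ln z)" by (simp only: exp_le_cancel_iff)
    also have "exp (ln z) = z" using z1 by simp
    finally have "exp (\<mu> * (b - a)) \<le> z" .
    moreover have "exp (\<mu> * (s - a)) \<le> exp (\<mu> * (b - a))" using mupos sb by simp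
    ultimately have ez: "exp (\<mu> * (s - a)) \<le> z" by (rule order_trans[rotated])
    define G where "G r = P * N0 * (exp (\<mu> * (r - a)) - 1) / \<mu>" for r
    have Gcont: "continuous_on {a..s} G" unfolding G_def using mupos by (intro continuous_intros) auto
    have Gder: "(G has_real_derivative P * N0 * exp (\<mu> * (r - a))) (at r within {r..})" for r
    proof -
      have "(G has_real_derivative P * N0 * (exp (\<mu> * (r - a)) * (\<mu> * 1)) / \<mu>) (at r within {r..})"
        unfolding G_def by (auto intro!: derivative_eq_intros)
      then show ?thesis using mupos by (simp add: mult.assoc)
    qed
    have Gs: "G s \<le> \<alpha>"
    proof -
      have "G s \<le> P * N0 * (z - 1) / \<mu>" unfolding G_def using ez K mupos
        by (intro divide_right_mono mult_left_mono) auto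
      also have "\<dots> = \<alpha>"
      proof -
        have "P \<noteq> 0" "N0 \<noteq> 0" using K by auto
        then show ?thesis unfolding z_def using mupos by (simp add: field_simps)
      qed
      finally show ?thesis .
    qed
    have G0: "G a = 0" unfolding G_def by simp
    have up: "(Df s - G s) - (Df a - G a) \<le> 0"
    proof -
      have "Df s - G s \<le> Df a - G a"
      proof (rule right_deriv_mono[OF as])
        show "continuous_on {a..s} (\<lambda>r. Df r - G r)" by (intro continuous_intros Dfcont Gcont)
        fix r assume r: "a \<le> r" "r < s"
        have "((\<lambda>r. Df r - G r) has_real_derivative q \<bullet> F r - P * N0 * exp (\<mu> * (r - a))) (at r within {r..})"
          using Dfder[of r] Gder[of r] r sb by (intro DERIV_diff) auto
        moreover have "q \<bullet> F r - P * N0 * exp (\<mu> * (r - a)) \<le> 0" using dbound[of r] r sb by simp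
        ultimately show "\<exists>D. ((\<lambda>r. Df r - G r) has_real_derivative D) (at r within {r..}) \<and> D \<le> 0" by blast
      qed
      then show ?thesis by simp
    qed
    have down: "(- Df s - G s) - (- Df a - G a) \<le> 0"
    proof -
      have "- Df s - G s \<le> - Df a - G a"
      proof (rule right_deriv_mono[OF as])
        show "continuous_on {a..s} (\<lambda>r. - Df r - G r)" by (intro continuous_intros Dfcont Gcont)
        fix r assume r: "a \<le> r" "r < s"
        have "((\<lambda>r. - Df r - G r) has_real_derivative - (q \<bullet> F r) - P * N0 * exp (\<mu> * (r - a))) (at r within {r..})"
          using Dfder[of r] Gder[of r] r sb by (intro DERIV_diff DERIV_minus) auto
        moreover have "- (q \<bullet> F r) - P * N0 * exp (\<mu> * (r - a)) \<le> 0" using dbound[of r] r sb by simp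
        ultimately show "\<exists>D. ((\<lambda>r. - Df r - G r) has_real_derivative D) (at r within {r..}) \<and> D \<le> 0" by blast
      qed
      then show ?thesis by simp
    qed
    show ?thesis using up down Gs G0 by simp
  qed
  then show ?thesis using Dfeq[of s] Dfeq[of a] a0 as by simp
qed

theorem theorem2:
  fixes n :: nat
    and Ac Bc :: "real mat"
    and L :: "nat \<Rightarrow> real"
    and x u :: "real \<Rightarrow> real vec"
    and T \<alpha> :: real
    and t :: "nat \<Rightarrow> real"
  assumes Ac_dim: "Ac \<in> carrier_mat (nx n) (nx n)"
    and Bc_dim: "Bc \<in> carrier_mat (nx n) (nu n)"
    and L_pos: "\<forall>i. L i > 0"
    and x_dim: "\<forall>s\<ge>0. x s \<in> carrier_vec (nx n)"
    and u_dim: "\<forall>s\<ge>0. u s \<in> carrier_vec (nu n)"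
    and x_cont: "\<forall>j<nx n. continuous_on {0..} (\<lambda>s. x s $ j)"
    and x_dyn: "\<forall>s\<ge>0. \<forall>j<nx n.
        ((\<lambda>r. x r $ j) has_real_derivative ((Ac *\<^sub>v x s + Bc *\<^sub>v u s) $ j)) (at s within {s..})"
    and T_pos: "T > 0"
    and u_held: "\<forall>j::nat. \<forall>s. real j * T \<le> s \<and> s < real (Suc j) * T \<longrightarrow> u s = u (real j * T)"
    and u_hat0: "\<forall>s\<ge>0. u s $ 1 = u s $ 0"
    and t_mono: "strict_mono t"
    and t_0: "t 0 = 0"
    and S_sub_T: "\<forall>j::nat. \<exists>k. t k = real j * T"
    and alpha_pos: "\<alpha> > 0"
    and trig: "\<forall>k. phi n Ac Bc * vnorm (x (t k) @\<^sub>v u (t k)) \<noteq> 0 \<longrightarrow>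
        t (Suc k) - t k \<le> ln (lognorm (Atil n Ac Bc) * \<alpha> / (phi n Ac Bc * vnorm (x (t k) @\<^sub>v u (t k))) + 1)
                           / lognorm (Atil n Ac Bc)"
  shows "\<forall>k. \<forall>i\<in>{2..n}. \<forall>s. t k \<le> s \<and> s < t (Suc k) \<longrightarrow>
           \<bar>dist_i n L i (x s) - dist_i n L i (x (t k))\<bar> \<le> \<alpha>"
proof (intro allI ballI impI)
  fix k i s assume i: "i \<in> {2..n}" and ks: "t k \<le> s \<and> s < t (Suc k)"
  define a where "a = t k"
  define b where "b = t (Suc k)"
  define uk where "uk = u a"
  have a0: "0 \<le> a" unfolding a_def using strict_mono_less_eq[OF t_mono, of 0 k] t_0 by simp
  have uk: "uk \<in> carrier_vec (nu n)" unfolding uk_def using u_dim a0 by simp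
  define j where "j = nat \<lfloor>a / T\<rfloor>"
  have aT: "a / T \<ge> 0" using a0 T_pos by simp
  have j1: "real j = of_int \<lfloor>a / T\<rfloor>" unfolding j_def using aT by simp
  have "real j \<le> a / T" using j1 by linarith
  then have jT: "real j * T \<le> a" using T_pos by (simp add: le_divide_eq)
  have "a / T < real j + 1" using j1 by linarith
  then have jT2: "a < real (Suc j) * T" using T_pos by (simp add: divide_less_eq algebra_simps)
  obtain k' where k': "t k' = real (Suc j) * T" using S_sub_T by blast
  have "t k < t k'" using jT2 k' a_def by simp
  then have "k < k'" using strict_mono_less[OF t_mono] by blast
  then have "t (Suc k) \<le> t k'" using strict_mono_less_eq[OF t_mono] by simp
  then have bT: "b \<le> real (Suc j) * T" using k' b_def by simp
  have ucon: "u r = uk" if "a \<le> r" "r < b" for r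
  proof -
    have "u r = u (real j * T)" using u_held jT that bT by force
    moreover have "u a = u (real j * T)" using u_held jT jT2 by blast
    ultimately show ?thesis unfolding uk_def by simp
  qed
  have dyn: "((\<lambda>r. x r $ jj) has_real_derivative ((Ac *\<^sub>v x r + Bc *\<^sub>v uk) $ jj)) (at r within {r..})"
    if "a \<le> r" "r < b" "jj < nx n" for r jj
    using x_dyn a0 that ucon[OF that(1,2)] by force
  have tr: "phi n Ac Bc * vnorm (x a @\<^sub>v uk) \<noteq> 0 \<longrightarrow>
        b - a \<le> ln (lognorm (Atil n Ac Bc) * \<alpha> / (phi n Ac Bc * vnorm (x a @\<^sub>v uk)) + 1)
                           / lognorm (Atil n Ac Bc)"
    using trig unfolding a_def b_def uk_def by blast
  have "a \<le> s" "s < b" using ks a_def b_def by auto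
  then show "\<bar>dist_i n L i (x s) - dist_i n L i (x (t k))\<bar> \<le> \<alpha>"
    using core[OF Ac_dim Bc_dim x_dim x_cont uk a0 _ _ dyn i alpha_pos tr] unfolding a_def by blast
qed

end
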